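(* There exists a constant $C$ such that for all $x,y\in[0,1]$, $\zeta(xy)\leq C\,\zeta(x)\,\zeta(y)$.
   Context: $\zeta(x)=\frac{1}{2\sqrt2}\int_0^x\sqrt{\frac{\log(1+u^{-2})}{u}}\,du$ for $x\geq0$. *)

theory Defs
  imports "HOL-Analysis.Analysis"
begin

definition zeta :: "real \<Rightarrow> real" where
  "zeta x = 1 / (2 * sqrt 2) * integral {0..x} (\<lambda>u. sqrt (ln (1 + u powr (-2)) / u))"

end

theory Submission
  imports Defs
begin

definition ff :: "real \<Rightarrow> real" where
  "ff u = sqrt (ln (1 + u powr (-2)) / u)"

lemma zeta_ff: "zeta x = 1 / (2 * sqrt 2) * integral {0..x} ff"
  unfolding zeta_def ff_def by simp

lemma ff_pos_eq: "u > 0 \<Longrightarrow> ff u = sqrt (ln (1 + 1 / u^2) / u)"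
  unfolding ff_def by (simp add: powr_minus powr_realpow divide_inverse)

lemma ff_nonneg: "u \<ge> 0 \<Longrightarrow> ff u \<ge> 0"
  unfolding ff_def by simp

lemma ff_zero: "ff 0 = 0"
  unfolding ff_def by simp

lemma pos1: "1 + 1 / (u::real)^2 > 0"
  by (simp add: add_pos_nonneg)

lemma pos1': "1 + 1 / (u::real)^2 \<noteq> 0"
  using pos1[of u] by linarith

lemma ff_cont: "continuous_on {a..b} ff" if "a > 0" for a b
proof -
  have "continuous_on {a..b} (\<lambda>u. sqrt (ln (1 + 1 / u^2) / u))"
    using that pos1' by (intro continuous_intros ballI) auto
  moreover have "\<forall>u\<in>{a..b}. ff u = sqrt (ln (1 + 1 / u^2) / u)"
    using that by (auto simp: ff_pos_eq)
  ultimately show ?thesis using continuous_on_cong by (smt (verit))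
qed

lemma ff_mono: assumes "0 < u" "u \<le> x" shows "ff x \<le> ff u"
proof -
  have "1/x^2 \<le> 1/u^2" using assms by (simp add: frac_le power_mono)
  hence l: "ln (1 + 1/x^2) \<le> ln (1 + 1/u^2)" using assms pos1 by simp
  have "ln (1 + 1/x^2) \<ge> 0" by simp
  hence "ln (1 + 1/x^2) / x \<le> ln (1 + 1/u^2) / u"
    using assms l by (meson divide_mono dual_order.trans less_imp_le) 
  then show ?thesis using assms by (simp add: ff_pos_eq)
qed

lemma key_ln:
  fixes a b :: real
  assumes "0 < a" "a \<le> 1" "0 < b" "b \<le> 1"
  shows "ln (1 + 1/(a*b)^2) \<le> (2 / ln 2) * (ln (1 + 1/a^2) * ln (1 + 1/b^2))"
proof -
  define s where "s = ln (1 + 1/a^2)"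
  define t where "t = ln (1 + 1/b^2)"
  have a1: "1/a^2 \<ge> 1" using assms power_le_one[of a 2] by (simp add: le_divide_eq)
  have b1: "1/b^2 \<ge> 1" using assms power_le_one[of b 2] by (simp add: le_divide_eq)
  have "1 + 1/(a*b)^2 \<le> (1 + 1/a^2) * (1 + 1/b^2)"
    using assms by (simp add: field_simps power_mult_distrib)
  hence "ln (1 + 1/(a*b)^2) \<le> ln ((1 + 1/a^2) * (1 + 1/b^2))"
    using pos1[of "a*b"] pos1[of a] pos1[of b] by (subst ln_le_cancel_iff) auto
  also have "\<dots> = s + t" unfolding s_def t_def
    using pos1' by (simp add: ln_mult add_pos_pos)
  finally have st: "ln (1 + 1/(a*b)^2) \<le> s + t" .
  have sl: "s \<ge> ln 2" unfolding s_def using a1 by simp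
  have tl: "t \<ge> ln 2" unfolding t_def using b1 by simp
  have l2: "ln 2 > (0::real)" by simp
  have h1: "s * ln 2 \<le> s * t" using sl tl l2 by (intro mult_left_mono; linarith)
  have h2: "t * ln 2 \<le> t * s" using sl tl l2 by (intro mult_left_mono; linarith)
  have "s \<le> s * t / ln 2" using sl tl l2
    using h1 by (simp add: le_divide_eq)
  moreover have "t \<le> s * t / ln 2" using sl tl l2
    using h2 by (simp add: le_divide_eq mult.commute)
  ultimately have "s + t \<le> (2 / ln 2) * (s * t)" by (simp add: field_simps)
  with st show ?thesis unfolding s_def t_def by simp
qed

lemma key_ff:
  assumes "0 < a" "a \<le> 1" "0 < b" "b \<le> 1"
  shows "ff (a*b) \<le> sqrt (2 / ln 2) * ff a * ff b"
proof -
  have "ff (a*b) = sqrt (ln (1 + 1/(a*b)^2) / (a*b))" using assms by (simp add: ff_pos_eq)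
  also have "\<dots> \<le> sqrt ((2 / ln 2) * (ln (1 + 1/a^2) * ln (1 + 1/b^2)) / (a*b))"
    using key_ln[OF assms] assms by (intro real_sqrt_le_mono divide_right_mono) auto
  also have "\<dots> = sqrt (2 / ln 2) * ff a * ff b" using assms
    by (simp add: ff_pos_eq real_sqrt_mult[symmetric])
  finally show ?thesis .
qed


lemma F_nonneg: "ff integrable_on {0..1} \<Longrightarrow> 0 \<le> t \<Longrightarrow> t \<le> 1 \<Longrightarrow> integral {0..t} ff \<ge> 0"
  by (rule integral_nonneg) (auto intro: integrable_subinterval_real ff_nonneg)

lemma x_ff_le: assumes I: "ff integrable_on {0..1}" and x: "0 < x" "x \<le> 1"
  shows "x * ff x \<le> integral {0..x} ff"
proof -
  define g where "g = (\<lambda>u. if u = 0 then ff x else ff u)"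
  have Ix: "ff integrable_on {0..x}" using I x by (auto intro: integrable_subinterval_real)
  have eq: "integral {0..x} ff = integral {0..x} g"
    by (rule integral_spike[of "{0}"]) (auto simp: g_def)
  have Ig: "g integrable_on {0..x}"
    by (rule integrable_spike[OF Ix, of "{0}"]) (auto simp: g_def)
  have "integral {0..x} (\<lambda>u. ff x) \<le> integral {0..x} g"
    by (rule integral_le[OF _ Ig]) (auto simp: g_def intro: ff_mono)
  then show ?thesis using eq x by simp
qed

theorem mainTheorem4:
  shows "\<exists>C::real. \<forall>x\<in>{0..1}. \<forall>y\<in>{0..1}. zeta (x * y) \<le> C * zeta x * zeta y"
proof (cases "ff integrable_on {0..1}")
  case False
  have z: "zeta t = 0" if "0 \<le> t" "t \<le> 1" for t
  proof (cases "t = 0")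
    case True then show ?thesis by (simp add: zeta_ff)
  next
    case f: False
    have "\<not> ff integrable_on {0..t}"
    proof
      assume "ff integrable_on {0..t}"
      moreover have "ff integrable_on {t..1}"
        using that f by (intro integrable_continuous_interval ff_cont) auto
      ultimately have "ff integrable_on {0..1}" using that Henstock_Kurzweil_Integration.integrable_combine[of 0 t 1 ff] by auto
      with False show False by simp
    qed
    then show ?thesis by (simp add: zeta_ff not_integrable_integral)
  qed
  show ?thesis
  proof (intro exI[of _ 0] ballI)
    fix x y :: real assume "x \<in> {0..1}" "y \<in> {0..1}"
    then have "0 \<le> x*y" "x*y \<le> 1" by (auto simp: mult_le_one)
    then show "zeta (x * y) \<le> 0 * zeta x * zeta y" using z by simp
  qed
next
  case I: True
  define K where "K = sqrt (2 / ln 2)"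
  have K0: "K \<ge> 0" unfolding K_def by simp
  define c :: real where "c = 1 / (2 * sqrt 2)"
  have c0: "c > 0" unfolding c_def by simp
  show ?thesis
  proof (intro exI[of _ "K / c"] ballI)
    fix x y :: real assume xr: "x \<in> {0..1}" and yr: "y \<in> {0..1}"
    have Fx: "integral {0..x} ff \<ge> 0" using xr F_nonneg[OF I] by auto
    have Fy: "integral {0..y} ff \<ge> 0" using yr F_nonneg[OF I] by auto
    show "zeta (x * y) \<le> K / c * zeta x * zeta y"
    proof (cases "x = 0 \<or> y = 0")
      case True
      then have "zeta (x*y) = 0" by (auto simp: zeta_ff)
      moreover have "K / c * zeta x * zeta y \<ge> 0"
        using Fx Fy K0 c0 by (simp add: zeta_ff)
      ultimately show ?thesis by simp
    next
      case False
      with xr yr have x: "0 < x" "x \<le> 1" and y: "0 < y" "y \<le> 1" by auto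
      have Ixy: "ff integrable_on {0..x*y}"
        using I x y by (intro integrable_subinterval_real[OF I]) (auto simp: mult_le_one)
      have img: "(\<lambda>t. t / x) ` {0..x*y} = {0..y}" using x by simp
      have S: "integral {0..y} (\<lambda>v. ff (x * v)) = (1 / x) * integral {0..x*y} ff"
        using integral_stretch_real[of x 0 "x*y" ff] x img by simp
      have Is: "(\<lambda>v. ff (x * v)) integrable_on {0..y}"
        using integrable_stretch_real[OF Ixy, of x] x img by simp
      have Iy: "ff integrable_on {0..y}" using I y by (auto intro: integrable_subinterval_real)
      have "integral {0..y} (\<lambda>v. ff (x * v)) \<le> integral {0..y} (\<lambda>v. K * ff x * ff v)"
      proof (rule integral_le[OF Is])
        show "(\<lambda>v. K * ff x * ff v) integrable_on {0..y}"
          using integrable_on_cmult_left[OF Iy, of "K * ff x"] by simp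
        fix v assume v: "v \<in> {0..y}"
        show "ff (x * v) \<le> K * ff x * ff v"
        proof (cases "v = 0")
          case True then show ?thesis by (simp add: ff_zero)
        next
          case False then show ?thesis using key_ff[of x v] x y v unfolding K_def by auto
        qed
      qed
      also have "\<dots> = K * ff x * integral {0..y} ff" by simp
      finally have le: "integral {0..y} (\<lambda>v. ff (x * v)) \<le> K * ff x * integral {0..y} ff" .
      have "integral {0..x*y} ff = x * integral {0..y} (\<lambda>v. ff (x * v))" using S x by simp
      also have "\<dots> \<le> x * (K * ff x * integral {0..y} ff)"
        using le x by (intro mult_left_mono) auto
      finally have "integral {0..x*y} ff \<le> K * (x * ff x) * integral {0..y} ff"
        by (simp add: ac_simps)
      also have "\<dots> \<le> K * integral {0..x} ff * integral {0..y} ff"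
        using x_ff_le[OF I x] K0 Fy by (intro mult_right_mono mult_left_mono) auto
      finally have "c * integral {0..x*y} ff \<le> c * (K * integral {0..x} ff * integral {0..y} ff)"
        using c0 by simp
      then show ?thesis using c0 unfolding zeta_ff c_def[symmetric] by (simp add: field_simps)
    qed
  qed
qed

end
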